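(* Let $R$ be a ring, $M$ a nonzero left $R$-module, $\Omega$ an infinite set, and $E=\mathrm{End}_R(\bigoplus_{i\in\Omega}M)$ or $E=\mathrm{End}_R(\prod_{i\in\Omega}M)$. If $U\subseteq E$ generates $E$ as a ring, then there exists a positive integer $n$ such that every element of $E$ is represented by a ring word of length at most $n$ in elements of $U$.
   Context: Rings are unital and associative. Ring words: for a ring $S$ and a subset $U\subseteq S$, an element $r\in S$ is represented by a ring word of length $1$ in elements of $U$ if $r\in U\cup\{0,1,-1\}$; recursively, $r$ is represented by a ring word of length $n$ in elements of $U$ if $r=p+q$ or $r=pq$ for some $p,q\in S$ represented by ring words of lengths $m_1$ and $m_2$ respectively in elements of $U$, with $n=m_1+m_2$. $U$ generates $E$ as a ring means every element of $E$ is represented by some ring word (of some length) in elements of $U$. *)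

theory Defs
  imports "HOL-Algebra.Ring"
begin

definition left_module :: "('r::ring_1 \<Rightarrow> 'm::ab_group_add \<Rightarrow> 'm) \<Rightarrow> bool" where
  "left_module smult \<longleftrightarrow>
     (\<forall>a x y. smult a (x + y) = smult a x + smult a y) \<and>
     (\<forall>a b x. smult (a + b) x = smult a x + smult b x) \<and>
     (\<forall>a b x. smult (a * b) x = smult a (smult b x)) \<and>
     (\<forall>x. smult 1 x = x)"

text \<open>Direct sum and direct product of copies of M indexed by Omega, realised as
  functions vanishing outside Omega (finitely supported for the direct sum).\<close>
definition dsum :: "'i set \<Rightarrow> ('i \<Rightarrow> 'm::zero) set" where
  "dsum \<Omega> = {f. (\<forall>i. i \<notin> \<Omega> \<longrightarrow> f i = 0) \<and> finite {i. f i \<noteq> 0}}"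

definition dprod :: "'i set \<Rightarrow> ('i \<Rightarrow> 'm::zero) set" where
  "dprod \<Omega> = {f. \<forall>i. i \<notin> \<Omega> \<longrightarrow> f i = 0}"

text \<open>R-linear endomorphisms of the submodule C of 'i => 'm (pointwise module
  structure), made extensional by mapping everything outside C to 0.\<close>
definition endos :: "('r::ring_1 \<Rightarrow> 'm::ab_group_add \<Rightarrow> 'm) \<Rightarrow> ('i \<Rightarrow> 'm) set
    \<Rightarrow> (('i \<Rightarrow> 'm) \<Rightarrow> ('i \<Rightarrow> 'm)) set" where
  "endos smult C = {\<phi>. (\<forall>x\<in>C. \<phi> x \<in> C) \<and>
      (\<forall>x\<in>C. \<forall>y\<in>C. \<phi> (\<lambda>i. x i + y i) = (\<lambda>i. \<phi> x i + \<phi> y i)) \<and>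
      (\<forall>a. \<forall>x\<in>C. \<phi> (\<lambda>i. smult a (x i)) = (\<lambda>i. smult a (\<phi> x i))) \<and>
      (\<forall>x. x \<notin> C \<longrightarrow> \<phi> x = (\<lambda>i. 0))}"

definition End_ring :: "('r::ring_1 \<Rightarrow> 'm::ab_group_add \<Rightarrow> 'm) \<Rightarrow> ('i \<Rightarrow> 'm) set
    \<Rightarrow> (('i \<Rightarrow> 'm) \<Rightarrow> ('i \<Rightarrow> 'm)) ring" where
  "End_ring smult C =
     \<lparr>carrier = endos smult C,
      mult = (\<lambda>\<phi> \<psi>. \<phi> \<circ> \<psi>),
      one = (\<lambda>x. if x \<in> C then x else (\<lambda>i. 0)),
      zero = (\<lambda>x i. 0),
      add = (\<lambda>\<phi> \<psi> x i. \<phi> x i + \<psi> x i)\<rparr>"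

inductive rword :: "('a, 'b) ring_scheme \<Rightarrow> 'a set \<Rightarrow> nat \<Rightarrow> 'a \<Rightarrow> bool"
  for S :: "('a, 'b) ring_scheme" and U :: "'a set" where
  base: "r \<in> U \<or> r = \<zero>\<^bsub>S\<^esub> \<or> r = \<one>\<^bsub>S\<^esub> \<or> r = \<ominus>\<^bsub>S\<^esub> \<one>\<^bsub>S\<^esub> \<Longrightarrow> rword S U 1 r"
| add: "rword S U m1 p \<Longrightarrow> rword S U m2 q \<Longrightarrow> rword S U (m1 + m2) (p \<oplus>\<^bsub>S\<^esub> q)"
| mul: "rword S U m1 p \<Longrightarrow> rword S U m2 q \<Longrightarrow> rword S U (m1 + m2) (p \<otimes>\<^bsub>S\<^esub> q)"

definition generates_ring :: "('a, 'b) ring_scheme \<Rightarrow> 'a set \<Rightarrow> bool" where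
  "generates_ring S U \<longleftrightarrow> (\<forall>r \<in> carrier S. \<exists>n. rword S U n r)"

end

theory Submission
  imports Defs
begin

lemma inj_nat_times:
  assumes "infinite (A::'i set)"
  shows "\<exists>e::nat \<times> 'i \<Rightarrow> 'i. inj_on e (UNIV \<times> A) \<and> e ` (UNIV \<times> A) \<subseteq> A"
proof -
  have 1: "(card_of (UNIV::nat set), card_of A) \<in> ordLeq" using assms infinite_iff_card_of_nat by blast
  have 2: "(card_of ((UNIV::nat set) \<times> A), card_of (A \<times> A)) \<in> ordLeq" using card_of_Times_mono1[OF 1] by blast
  have 3: "(card_of (A \<times> A), card_of A) \<in> ordIso" using card_of_Times_same_infinite assms by blast
  have "(card_of ((UNIV::nat set) \<times> A), card_of A) \<in> ordLeq" using 2 3 ordLeq_ordIso_trans by blast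
  then show ?thesis using card_of_ordLeq by blast
qed

locale setup5 =
  fixes smult :: "'r::ring_1 \<Rightarrow> 'm::ab_group_add \<Rightarrow> 'm"
    and \<Omega> :: "'i set"
    and C :: "('i \<Rightarrow> 'm) set"
    and e :: "nat \<times> 'i \<Rightarrow> 'i"
  assumes modl: "left_module smult"
    and Cdef: "C = dsum \<Omega> \<or> C = dprod \<Omega>"
    and einj: "inj_on e (UNIV \<times> \<Omega>)"
    and eimg: "e ` (UNIV \<times> \<Omega>) \<subseteq> \<Omega>"
begin

definition h where "h = inv_into (UNIV \<times> \<Omega>) e"

definition ainj :: "nat \<Rightarrow> ('i \<Rightarrow> 'm) \<Rightarrow> ('i \<Rightarrow> 'm)" where
  "ainj n x = (if x \<in> C then (\<lambda>j. if j \<in> e ` ({n} \<times> \<Omega>) then x (snd (h j)) else 0) else (\<lambda>j. 0))"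

definition bproj :: "nat \<Rightarrow> ('i \<Rightarrow> 'm) \<Rightarrow> ('i \<Rightarrow> 'm)" where
  "bproj n y = (if y \<in> C then (\<lambda>w. if w \<in> \<Omega> then y (e (n, w)) else 0) else (\<lambda>j. 0))"

definition gsum :: "(nat \<Rightarrow> ('i \<Rightarrow> 'm) \<Rightarrow> ('i \<Rightarrow> 'm)) \<Rightarrow> ('i \<Rightarrow> 'm) \<Rightarrow> ('i \<Rightarrow> 'm)" where
  "gsum F y = (if y \<in> C then (\<lambda>j. if j \<in> e ` (UNIV \<times> \<Omega>) then F (fst (h j)) (bproj (fst (h j)) y) (snd (h j)) else 0) else (\<lambda>j. 0))"

lemma h_e: "w \<in> \<Omega> \<Longrightarrow> h (e (n, w)) = (n, w)"
  unfolding h_def using einj by (simp add: inv_into_f_f)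

lemma smult_zero: "smult a 0 = 0"
proof -
  have "smult a (0 + 0) = smult a 0 + smult a 0" using modl unfolding left_module_def by blast
  then show ?thesis by simp
qed

lemma smult_add: "smult a (x + y) = smult a x + smult a y"
  using modl unfolding left_module_def by blast

lemma C0: "(\<lambda>j. 0) \<in> C"
  using Cdef by (auto simp: dsum_def dprod_def)

lemma Cout: "x \<in> C \<Longrightarrow> i \<notin> \<Omega> \<Longrightarrow> x i = 0"
  using Cdef by (auto simp: dsum_def dprod_def)

lemma Cfin: "x \<in> C \<Longrightarrow> C = dsum \<Omega> \<Longrightarrow> finite {i. x i \<noteq> 0}"
  by (auto simp: dsum_def)

lemma Cintro: "(\<And>i. i \<notin> \<Omega> \<Longrightarrow> z i = 0) \<Longrightarrow> (C = dsum \<Omega> \<Longrightarrow> finite {i. z i \<noteq> 0}) \<Longrightarrow> z \<in> C"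
  using Cdef by (auto simp: dsum_def dprod_def)

lemma endo_zero: "\<phi> \<in> endos smult C \<Longrightarrow> \<phi> (\<lambda>j. 0) = (\<lambda>j. 0)"
proof -
  assume a: "\<phi> \<in> endos smult C"
  then have add: "\<forall>x\<in>C. \<forall>y\<in>C. \<phi> (\<lambda>i. x i + y i) = (\<lambda>i. \<phi> x i + \<phi> y i)"
    unfolding endos_def by blast
  have "\<phi> (\<lambda>i. (\<lambda>j. 0) i + (\<lambda>j. 0) i) = (\<lambda>i. \<phi> (\<lambda>j. 0) i + \<phi> (\<lambda>j. 0) i)"
    using bspec[OF bspec[OF add C0] C0] .
  then have "\<phi> (\<lambda>j. 0) = (\<lambda>i. \<phi> (\<lambda>j. 0) i + \<phi> (\<lambda>j. 0) i)" by simp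
  then show ?thesis by (metis add_cancel_right_right)
qed

lemma Cadd: "x \<in> C \<Longrightarrow> y \<in> C \<Longrightarrow> (\<lambda>i. x i + y i) \<in> C"
proof (rule Cintro)
  assume x: "x \<in> C" and y: "y \<in> C"
  show "\<And>i. i \<notin> \<Omega> \<Longrightarrow> x i + y i = 0" by (simp add: Cout[OF x] Cout[OF y])
  assume d: "C = dsum \<Omega>"
  have "{i. x i + y i \<noteq> 0} \<subseteq> {i. x i \<noteq> 0} \<union> {i. y i \<noteq> 0}" by auto
  then show "finite {i. x i + y i \<noteq> 0}" using Cfin[OF x d] Cfin[OF y d] finite_subset by blast
qed

lemma Csm: "x \<in> C \<Longrightarrow> (\<lambda>i. smult a (x i)) \<in> C"
proof (rule Cintro)
  assume x: "x \<in> C"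
  show "\<And>i. i \<notin> \<Omega> \<Longrightarrow> smult a (x i) = 0" by (simp add: Cout[OF x] smult_zero)
  assume d: "C = dsum \<Omega>"
  have "{i. smult a (x i) \<noteq> 0} \<subseteq> {i. x i \<noteq> 0}" using smult_zero by auto
  then show "finite {i. smult a (x i) \<noteq> 0}" using Cfin[OF x d] finite_subset by blast
qed

lemma ainj_C: "x \<in> C \<Longrightarrow> ainj n x \<in> C"
proof (rule Cintro)
  assume x: "x \<in> C"
  show "\<And>i. i \<notin> \<Omega> \<Longrightarrow> ainj n x i = 0" using x eimg unfolding ainj_def by auto
  assume d: "C = dsum \<Omega>"
  have "{j. ainj n x j \<noteq> 0} \<subseteq> e ` ({n} \<times> {w. x w \<noteq> 0})"
  proof
    fix j assume "j \<in> {j. ainj n x j \<noteq> 0}"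
    then obtain w where w: "w \<in> \<Omega>" "j = e (n, w)" "x (snd (h j)) \<noteq> 0"
      using x unfolding ainj_def by (auto split: if_splits)
    then show "j \<in> e ` ({n} \<times> {w. x w \<noteq> 0})" using h_e by auto
  qed
  then show "finite {j. ainj n x j \<noteq> 0}" using Cfin[OF x d] finite_subset by blast
qed

lemma ainj_endo: "ainj n \<in> endos smult C"
  unfolding endos_def
proof (intro CollectI conjI ballI allI impI)
  show "\<And>x. x \<in> C \<Longrightarrow> ainj n x \<in> C" by (rule ainj_C)
  show "\<And>x y. x \<in> C \<Longrightarrow> y \<in> C \<Longrightarrow> ainj n (\<lambda>i. x i + y i) = (\<lambda>i. ainj n x i + ainj n y i)"
    using Cadd unfolding ainj_def by (auto intro!: ext)
  show "\<And>a x. x \<in> C \<Longrightarrow> ainj n (\<lambda>i. smult a (x i)) = (\<lambda>i. smult a (ainj n x i))"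
    using Csm smult_zero unfolding ainj_def by (auto intro!: ext)
  show "\<And>x. x \<notin> C \<Longrightarrow> ainj n x = (\<lambda>i. 0)" unfolding ainj_def by auto
qed

lemma bproj_C: "y \<in> C \<Longrightarrow> bproj n y \<in> C"
proof (rule Cintro)
  assume y: "y \<in> C"
  show "\<And>i. i \<notin> \<Omega> \<Longrightarrow> bproj n y i = 0" using y unfolding bproj_def by auto
  assume d: "C = dsum \<Omega>"
  have inj: "inj_on (\<lambda>w. e (n, w)) \<Omega>" using einj unfolding inj_on_def by auto
  have "{j. bproj n y j \<noteq> 0} \<subseteq> (\<lambda>w. e (n, w)) -` {i. y i \<noteq> 0} \<inter> \<Omega>"
    using y unfolding bproj_def by (auto split: if_splits)
  moreover have "finite ((\<lambda>w. e (n, w)) -` {i. y i \<noteq> 0} \<inter> \<Omega>)"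
    using finite_vimage_IntI[OF Cfin[OF y d] inj] .
  ultimately show "finite {j. bproj n y j \<noteq> 0}" using finite_subset by blast
qed

lemma bproj_endo: "bproj n \<in> endos smult C"
  unfolding endos_def
proof (intro CollectI conjI ballI allI impI)
  show "\<And>x. x \<in> C \<Longrightarrow> bproj n x \<in> C" by (rule bproj_C)
  show "\<And>x y. x \<in> C \<Longrightarrow> y \<in> C \<Longrightarrow> bproj n (\<lambda>i. x i + y i) = (\<lambda>i. bproj n x i + bproj n y i)"
    using Cadd unfolding bproj_def by (auto intro!: ext)
  show "\<And>a x. x \<in> C \<Longrightarrow> bproj n (\<lambda>i. smult a (x i)) = (\<lambda>i. smult a (bproj n x i))"
    using Csm smult_zero unfolding bproj_def by (auto intro!: ext)
  show "\<And>x. x \<notin> C \<Longrightarrow> bproj n x = (\<lambda>i. 0)" unfolding bproj_def by auto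
qed

lemma ba: "x \<in> C \<Longrightarrow> bproj n (ainj n x) = x"
  using ainj_C[of x n] h_e Cout unfolding bproj_def ainj_def by (auto intro!: ext)

lemma endo_add: "\<phi> \<in> endos smult C \<Longrightarrow> x \<in> C \<Longrightarrow> y \<in> C \<Longrightarrow> \<phi> (\<lambda>i. x i + y i) = (\<lambda>i. \<phi> x i + \<phi> y i)"
  unfolding endos_def by blast

lemma endo_sm: "\<phi> \<in> endos smult C \<Longrightarrow> x \<in> C \<Longrightarrow> \<phi> (\<lambda>i. smult a (x i)) = (\<lambda>i. smult a (\<phi> x i))"
  unfolding endos_def by blast

lemma endo_C: "\<phi> \<in> endos smult C \<Longrightarrow> x \<in> C \<Longrightarrow> \<phi> x \<in> C"
  unfolding endos_def by blast

lemma gsum_C: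
  assumes F: "\<And>i. F i \<in> endos smult C" and y: "y \<in> C"
  shows "gsum F y \<in> C"
proof (rule Cintro)
  show "\<And>i. i \<notin> \<Omega> \<Longrightarrow> gsum F y i = 0" using y eimg unfolding gsum_def by auto
  assume d: "C = dsum \<Omega>"
  define I where "I = (fst \<circ> h) ` {j. y j \<noteq> 0}"
  have fI: "finite I" unfolding I_def using Cfin[OF y d] by simp
  have "{j. gsum F y j \<noteq> 0} \<subseteq> e ` (SIGMA i:I. {w. F i (bproj i y) w \<noteq> 0})"
  proof
    fix j assume "j \<in> {j. gsum F y j \<noteq> 0}"
    then obtain i w where w: "w \<in> \<Omega>" "j = e (i, w)" "F (fst (h j)) (bproj (fst (h j)) y) (snd (h j)) \<noteq> 0"
      using y unfolding gsum_def by (auto split: if_splits)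
    then have hj: "h j = (i, w)" using h_e by simp
    with w have nz: "F i (bproj i y) w \<noteq> 0" by simp
    have "bproj i y \<noteq> (\<lambda>j. 0)"
    proof
      assume "bproj i y = (\<lambda>j. 0)"
      then show False using nz endo_zero[OF F[of i]] by simp
    qed
    then obtain w' where "bproj i y w' \<noteq> 0" by auto
    then have w': "w' \<in> \<Omega>" "y (e (i, w')) \<noteq> 0" using y unfolding bproj_def by (auto split: if_splits)
    then have "i \<in> I" unfolding I_def using h_e[OF w'(1), of i] by (auto intro!: image_eqI[where x="e (i, w')"])
    then show "j \<in> e ` (SIGMA i:I. {w. F i (bproj i y) w \<noteq> 0})" using w nz by auto
  qed
  moreover have "finite (SIGMA i:I. {w. F i (bproj i y) w \<noteq> 0})"
    using fI Cfin[OF endo_C[OF F bproj_C[OF y]] d] by (intro finite_SigmaI) auto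
  ultimately show "finite {j. gsum F y j \<noteq> 0}" using finite_subset by blast
qed

lemma gsum_endo:
  assumes F: "\<And>i. F i \<in> endos smult C"
  shows "gsum F \<in> endos smult C"
  unfolding endos_def
proof (intro CollectI conjI ballI allI impI)
  show "\<And>x. x \<in> C \<Longrightarrow> gsum F x \<in> C" using gsum_C F by blast
  show "gsum F (\<lambda>i. x i + y i) = (\<lambda>i. gsum F x i + gsum F y i)" if x: "x \<in> C" and y: "y \<in> C" for x y
  proof -
    have "\<And>n. F n (bproj n (\<lambda>i. x i + y i)) = (\<lambda>i. F n (bproj n x) i + F n (bproj n y) i)"
      using endo_add[OF bproj_endo x y] endo_add[OF F bproj_C[OF x] bproj_C[OF y]] by simp
    then show ?thesis using x y Cadd[OF x y] unfolding gsum_def by (auto intro!: ext)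
  qed
  show "gsum F (\<lambda>i. smult a (x i)) = (\<lambda>i. smult a (gsum F x i))" if x: "x \<in> C" for a x
  proof -
    have "\<And>n. F n (bproj n (\<lambda>i. smult a (x i))) = (\<lambda>i. smult a (F n (bproj n x) i))"
      using endo_sm[OF bproj_endo x] endo_sm[OF F bproj_C[OF x]] by simp
    then show ?thesis using x Csm[OF x] smult_zero unfolding gsum_def by (auto intro!: ext)
  qed
  show "\<And>x. x \<notin> C \<Longrightarrow> gsum F x = (\<lambda>i. 0)" unfolding gsum_def by auto
qed

lemma bga:
  assumes F: "\<And>i. F i \<in> endos smult C"
  shows "bproj n \<circ> gsum F \<circ> ainj n = F n"
proof
  fix x
  show "(bproj n \<circ> gsum F \<circ> ainj n) x = F n x"
  proof (cases "x \<in> C")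
    case False
    then show ?thesis using endo_zero[OF gsum_endo[of F, OF F]] endo_zero[OF bproj_endo] F[of n]
      unfolding ainj_def endos_def by auto
  next
    case True
    have a: "ainj n x \<in> C" using ainj_C[OF True] .
    have g: "gsum F (ainj n x) \<in> C" using gsum_C[OF F a] .
    show ?thesis
    proof
      fix w
      show "(bproj n \<circ> gsum F \<circ> ainj n) x w = F n x w"
      proof (cases "w \<in> \<Omega>")
        case False
        then show ?thesis using g Cout[OF endo_C[OF F True]] unfolding bproj_def by simp
      next
        case w: True
        have "e (n, w) \<in> e ` (UNIV \<times> \<Omega>)" using w by auto
        then have "gsum F (ainj n x) (e (n, w)) = F n (bproj n (ainj n x)) w"
          using a h_e[OF w] unfolding gsum_def by simp
        then show ?thesis using g w ba[OF True] unfolding bproj_def by simp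
      qed
    qed
  qed
qed

end

lemma rword_pos: "rword S U n r \<Longrightarrow> n > 0"
  by (induction rule: rword.induct) auto

theorem theorem5:
  fixes smult :: "'r::ring_1 \<Rightarrow> 'm::ab_group_add \<Rightarrow> 'm"
    and \<Omega> :: "'i set"
    and C :: "('i \<Rightarrow> 'm) set"
    and U :: "(('i \<Rightarrow> 'm) \<Rightarrow> ('i \<Rightarrow> 'm)) set"
  assumes "left_module smult"
    and "\<exists>x::'m. x \<noteq> 0"
    and "infinite \<Omega>"
    and "C = dsum \<Omega> \<or> C = dprod \<Omega>"
    and "U \<subseteq> carrier (End_ring smult C)"
    and "generates_ring (End_ring smult C) U"
  shows "\<exists>n::nat. n > 0 \<and> (\<forall>r \<in> carrier (End_ring smult C). \<exists>k \<le> n. rword (End_ring smult C) U k r)"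
proof -
  obtain e :: "nat \<times> 'i \<Rightarrow> 'i" where e: "inj_on e (UNIV \<times> \<Omega>)" "e ` (UNIV \<times> \<Omega>) \<subseteq> \<Omega>"
    using inj_nat_times[OF assms(3)] by blast
  interpret setup5 smult \<Omega> C e using assms(1,4) e by unfold_locales auto
  let ?S = "End_ring smult C"
  have car: "carrier ?S = endos smult C" by (simp add: End_ring_def)
  have mul: "\<And>p q. p \<otimes>\<^bsub>?S\<^esub> q = p \<circ> q" by (simp add: End_ring_def)
  have gen: "\<And>r. r \<in> endos smult C \<Longrightarrow> \<exists>n. rword ?S U n r"
    using assms(6) car unfolding generates_ring_def by blast
  have key: "\<exists>i. \<forall>f\<in>endos smult C. \<exists>w k. k \<le> i \<and> rword ?S U k w \<and> f = bproj i \<circ> w \<circ> ainj i"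
  proof (rule ccontr)
    assume "\<not> ?thesis"
    then have "\<forall>i. \<exists>f. f \<in> endos smult C \<and> (\<forall>w k. k \<le> i \<longrightarrow> rword ?S U k w \<longrightarrow> f \<noteq> bproj i \<circ> w \<circ> ainj i)"
      by blast
    then obtain F where F: "\<And>i. F i \<in> endos smult C"
      and Fn: "\<And>i w k. k \<le> i \<Longrightarrow> rword ?S U k w \<Longrightarrow> F i \<noteq> bproj i \<circ> w \<circ> ainj i"
      by metis
    obtain N where N: "rword ?S U N (gsum F)" using gen[OF gsum_endo[of F, OF F]] by blast
    have "F N = bproj N \<circ> gsum F \<circ> ainj N" using bga[of F N, OF F] by (rule sym)
    then show False using Fn[OF order.refl N] by blast
  qed
  then obtain i where i: "\<And>f. f \<in> endos smult C \<Longrightarrow> \<exists>w k. k \<le> i \<and> rword ?S U k w \<and> f = bproj i \<circ> w \<circ> ainj i"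
    by blast
  obtain ka where ka: "rword ?S U ka (ainj i)" using gen[OF ainj_endo] by blast
  obtain kb where kb: "rword ?S U kb (bproj i)" using gen[OF bproj_endo] by blast
  have "\<forall>r \<in> carrier ?S. \<exists>k \<le> kb + i + ka. rword ?S U k r"
  proof
    fix r assume "r \<in> carrier ?S"
    then obtain w k where w: "k \<le> i" "rword ?S U k w" "r = bproj i \<circ> w \<circ> ainj i"
      using i car by blast
    have "rword ?S U (kb + (k + ka)) (bproj i \<otimes>\<^bsub>?S\<^esub> (w \<otimes>\<^bsub>?S\<^esub> ainj i))"
      by (intro rword.mul kb ka w(2))
    then have "rword ?S U (kb + (k + ka)) r" using w(3) by (simp add: mul comp_assoc)
    then show "\<exists>k \<le> kb + i + ka. rword ?S U k r" using w(1) by (intro exI[of _ "kb + (k + ka)"]) auto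
  qed
  moreover have "kb + i + ka > 0" using rword_pos[OF kb] by simp
  ultimately show ?thesis by blast
qed

end
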